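(* For every $\varepsilon_0\in[0,1/4)$ and integer $w\ge1$, any $\varepsilon_0$-error online algorithm computing the width-$w$ $\mathrm{Tribes}$ function on the $\mathrm{Tribes}$ instance must reveal $\Omega(2^w)$ tribes in expectation (the implied constant may depend on $\varepsilon_0$ but not on $w$).
   Context: The $\mathrm{Tribes}$ instance of width $w$: variables $(x_{i,j})_{i\in[2^w],j\in[w]}$, $f(x)=\bigvee_{i=1}^{2^w}\bigwedge_{j=1}^w x_{i,j}$, input $x$ uniform, and for each $i$ the costs $(c_{i,1},\dots,c_{i,w})$ are an independent uniformly random permutation of $[w]$. Online priced query model: the algorithm maintains investments $\theta$ (initially $0$), increasing one coordinate by a positive amount per step; $x_{i,j}$ is revealed once $\theta_{i,j}\ge c_{i,j}$. An algorithm reveals the $i$-th tribe if at least one of $x_{i,1},\dots,x_{i,w}$ is revealed to it. It is $\varepsilon_0$-error if it outputs $f(x)$ except with probability at most $\varepsilon_0$ over the input, costs and its randomness. *)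

theory Defs
  imports "HOL-Probability.Probability"
begin

definition tvars :: "nat \<Rightarrow> (nat \<times> nat) set" where
  "tvars w = {..<2^w} \<times> {..<w}"

definition tribes :: "nat \<Rightarrow> (nat \<times> nat \<Rightarrow> bool) \<Rightarrow> bool" where
  "tribes w x = (\<exists>i<2^w. \<forall>j<w. x (i, j))"

definition inputs :: "nat \<Rightarrow> (nat \<times> nat \<Rightarrow> bool) set" where
  "inputs w = {x. \<forall>v. v \<notin> tvars w \<longrightarrow> x v = False}"

(* Cost space (uniform distribution): for every tribe i, (c(i,1..w)) is a permutation of [w] = {1..w};
   the uniform distribution on this product set is exactly independent uniform permutations. *)
definition costs :: "nat \<Rightarrow> (nat \<times> nat \<Rightarrow> nat) set" where
  "costs w = {c. (\<forall>i<2^w. bij_betw (\<lambda>j. c (i, j)) {..<w} {1..w}) \<and>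
                 (\<forall>v. v \<notin> tvars w \<longrightarrow> c v = 0)}"

(* What the algorithm sees: the values of the revealed variables. *)
type_synonym observation = "nat \<times> nat \<Rightarrow> bool option"

datatype action = Invest "nat \<times> nat" real | Output bool

(* A deterministic online strategy: maps the history of observations (one per step so far,
   starting with the initial observation) to the next action. *)
type_synonym strategy = "observation list \<Rightarrow> action"

definition wf_strategy :: "strategy \<Rightarrow> bool" where
  "wf_strategy s = (\<forall>h v d. s h = Invest v d \<longrightarrow> d > 0)"

definition observe ::
  "nat \<Rightarrow> (nat \<times> nat \<Rightarrow> bool) \<Rightarrow> (nat \<times> nat \<Rightarrow> nat) \<Rightarrow> (nat \<times> nat \<Rightarrow> real) \<Rightarrow> observation" where
  "observe w x c \<theta> v = (if v \<in> tvars w \<and> real (c v) \<le> \<theta> v then Some (x v) else None)"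

(* State after n steps: investments, observation history, output (if already produced). *)
fun run :: "nat \<Rightarrow> strategy \<Rightarrow> (nat \<times> nat \<Rightarrow> bool) \<Rightarrow> (nat \<times> nat \<Rightarrow> nat) \<Rightarrow> nat \<Rightarrow>
    (nat \<times> nat \<Rightarrow> real) \<times> observation list \<times> bool option" where
  "run w s x c 0 = ((\<lambda>_. 0), [observe w x c (\<lambda>_. 0)], None)"
| "run w s x c (Suc n) =
     (case run w s x c n of (\<theta>, h, out) \<Rightarrow>
        if out \<noteq> None then (\<theta>, h, out)
        else (case s h of
                Output b \<Rightarrow> (\<theta>, h, Some b)
              | Invest v d \<Rightarrow>
                  (let \<theta>' = \<theta>(v := \<theta> v + d) in (\<theta>', h @ [observe w x c \<theta>'], None))))"

definition revealed :: "nat \<Rightarrow> strategy \<Rightarrow> (nat \<times> nat \<Rightarrow> bool) \<Rightarrow> (nat \<times> nat \<Rightarrow> nat) \<Rightarrow> nat \<times> nat \<Rightarrow> bool" where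
  "revealed w s x c v = (v \<in> tvars w \<and> (\<exists>n. real (c v) \<le> fst (run w s x c n) v))"

definition tribes_revealed :: "nat \<Rightarrow> strategy \<Rightarrow> (nat \<times> nat \<Rightarrow> bool) \<Rightarrow> (nat \<times> nat \<Rightarrow> nat) \<Rightarrow> nat" where
  "tribes_revealed w s x c = card {i. i < 2^w \<and> (\<exists>j<w. revealed w s x c (i, j))}"

(* The strategy outputs f(x) (never outputting counts as an error). *)
definition correct :: "nat \<Rightarrow> strategy \<Rightarrow> (nat \<times> nat \<Rightarrow> bool) \<Rightarrow> (nat \<times> nat \<Rightarrow> nat) \<Rightarrow> bool" where
  "correct w s x c = (\<exists>n. snd (snd (run w s x c n)) = Some (tribes w x))"

definition det_error :: "nat \<Rightarrow> strategy \<Rightarrow> real" where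
  "det_error w s = real (card {(x, c). x \<in> inputs w \<and> c \<in> costs w \<and> \<not> correct w s x c})
                   / real (card (inputs w \<times> costs w))"

definition det_revealed :: "nat \<Rightarrow> strategy \<Rightarrow> real" where
  "det_revealed w s = (\<Sum>(x, c) \<in> inputs w \<times> costs w. real (tribes_revealed w s x c))
                      / real (card (inputs w \<times> costs w))"

(* A randomized online algorithm is a probability distribution R over (well-formed) deterministic
   strategies; its error and expected number of revealed tribes are the averages over R. *)
definition randomized_alg :: "nat \<Rightarrow> strategy measure \<Rightarrow> bool" where
  "randomized_alg w R = (prob_space R \<and> (\<forall>s\<in>space R. wf_strategy s) \<and>
      det_error w \<in> borel_measurable R \<and> det_revealed w \<in> borel_measurable R)"

end

theory Submission
  imports Defs
begin

lemma out_mono: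
  assumes "snd (snd (run w s x c n)) = Some b"
  shows "snd (snd (run w s x c (n + k))) = Some b"
  using assms
proof (induction k)
  case 0 then show ?case by simp
next
  case (Suc k)
  then show ?case by (auto split: prod.splits)
qed

lemma out_unique:
  assumes "snd (snd (run w s x c n)) = Some b" "snd (snd (run w s x c m)) = Some b'"
  shows "b = b'"
proof -
  have "snd (snd (run w s x c (n + m))) = Some b" by (rule out_mono[OF assms(1)])
  moreover have "snd (snd (run w s x c (m + n))) = Some b'" by (rule out_mono[OF assms(2)])
  ultimately show ?thesis by (simp add: add.commute)
qed

lemma revealed_at:
  assumes "v \<in> tvars w" "real (c v) \<le> fst (run w s x c n) v"
  shows "revealed w s x c v"
  using assms unfolding revealed_def by blast

lemma sim:
  assumes agree: "\<And>v. revealed w s x c v \<Longrightarrow> x v = y v"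
  shows "run w s x c n = run w s y c n"
proof (induction n)
  case 0
  have "observe w x c (\<lambda>_. 0) = observe w y c (\<lambda>_. 0)"
  proof
    fix v show "observe w x c (\<lambda>_. 0) v = observe w y c (\<lambda>_. 0) v"
      using agree[of v] revealed_at[of v w c s x 0] by (auto simp: observe_def)
  qed
  then show ?case by simp
next
  case (Suc n)
  obtain \<theta> h out where r: "run w s x c n = (\<theta>, h, out)" by (cases "run w s x c n") auto
  have ry: "run w s y c n = (\<theta>, h, out)" using Suc r by simp
  show ?case
  proof (cases "out = None")
    case False then show ?thesis using r ry by simp
  next
    case True
    show ?thesis
    proof (cases "s h")
      case (Output b) then show ?thesis using r ry True by simp
    next
      case (Invest v d)
      define \<theta>' where "\<theta>' = \<theta>(v := \<theta> v + d)"
      have th: "fst (run w s x c (Suc n)) = \<theta>'" using r True Invest by (simp add: \<theta>'_def Let_def)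
      have "observe w x c \<theta>' = observe w y c \<theta>'"
      proof
        fix u show "observe w x c \<theta>' u = observe w y c \<theta>' u"
          using agree[of u] revealed_at[of u w c s x "Suc n"] th by (auto simp: observe_def)
      qed
      then show ?thesis using r ry True Invest by (simp add: \<theta>'_def Let_def)
    qed
  qed
qed


definition upd :: "nat \<Rightarrow> nat \<Rightarrow> (nat \<times> nat \<Rightarrow> bool) \<Rightarrow> (nat \<times> nat \<Rightarrow> bool)" where
  "upd w i x = (\<lambda>v. if fst v = i \<and> snd v < w then True else x v)"

definition Rv :: "nat \<Rightarrow> strategy \<Rightarrow> (nat \<times> nat \<Rightarrow> bool) \<Rightarrow> (nat \<times> nat \<Rightarrow> nat) \<Rightarrow> nat set" where
  "Rv w s x c = {i. i < 2^w \<and> (\<exists>j<w. revealed w s x c (i, j))}"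

lemma wrong_upd:
  assumes "\<not> tribes w x" "correct w s x c" "i < 2^w" "i \<notin> Rv w s x c"
  shows "\<not> correct w s (upd w i x) c"
proof
  assume cu: "correct w s (upd w i x) c"
  have ag: "x v = upd w i x v" if "revealed w s x c v" for v
  proof -
    have "\<not> (fst v = i \<and> snd v < w)"
    proof
      assume "fst v = i \<and> snd v < w"
      then have "revealed w s x c (i, snd v)" using that by (cases v) auto
      then show False using assms(3,4) \<open>fst v = i \<and> snd v < w\<close> by (auto simp: Rv_def)
    qed
    then show ?thesis by (auto simp add: upd_def)
  qed
  have eq: "run w s x c n = run w s (upd w i x) c n" for n by (rule sim) (use ag in auto)
  have tu: "tribes w (upd w i x)" using assms(3) by (auto simp: tribes_def upd_def)
  obtain n where n: "snd (snd (run w s x c n)) = Some False" using assms(1,2) by (auto simp: correct_def)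
  obtain m where m: "snd (snd (run w s x c m)) = Some True" using cu tu eq by (auto simp: correct_def)
  show False using out_unique[OF n m] by simp
qed

lemma finite_inputs: "finite (inputs w)"
proof -
  have "inputs w = {f. \<forall>v. (v \<in> tvars w \<longrightarrow> f v \<in> UNIV) \<and> (v \<notin> tvars w \<longrightarrow> f v = False)}"
    by (auto simp: inputs_def)
  also have "finite \<dots>" by (rule finite_set_of_finite_funs) (auto simp: tvars_def)
  finally show ?thesis .
qed

lemma finite_costs: "finite (costs w)"
proof -
  have "costs w \<subseteq> {f. \<forall>v. (v \<in> tvars w \<longrightarrow> f v \<in> {1..w}) \<and> (v \<notin> tvars w \<longrightarrow> f v = 0)}"
  proof (intro subsetI CollectI allI conjI impI)
    fix c v assume c: "c \<in> costs w"
    { assume "v \<in> tvars w"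
      then obtain a b where v: "v = (a, b)" "a < 2^w" "b < w" by (auto simp: tvars_def)
      then have "bij_betw (\<lambda>j. c (a, j)) {..<w} {1..w}" using c by (auto simp: costs_def)
      then show "c v \<in> {1..w}" using v bij_betw_apply by fastforce }
    { assume "v \<notin> tvars w" then show "c v = 0" using c unfolding costs_def by blast }
  qed
  moreover have "finite {f. \<forall>v. (v \<in> tvars w \<longrightarrow> f v \<in> {1..w}) \<and> (v \<notin> tvars w \<longrightarrow> f v = (0::nat))}"
    by (rule finite_set_of_finite_funs) (auto simp: tvars_def)
  ultimately show ?thesis by (rule finite_subset)
qed

lemma costs_ne: "costs w \<noteq> {}"
proof -
  define c where "c = (\<lambda>v::nat\<times>nat. if v \<in> tvars w then snd v + 1 else 0)"
  have "c \<in> costs w"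
    unfolding costs_def
  proof (intro CollectI conjI allI impI)
    fix i assume "i < (2::nat)^w"
    show "bij_betw (\<lambda>j. c (i, j)) {..<w} {1..w}"
    proof (rule bij_betw_byWitness[where f'="\<lambda>j. j - 1"])
      show "\<forall>a\<in>{..<w}. c (i, a) - 1 = a" using \<open>i < 2^w\<close> by (auto simp: c_def tvars_def)
      show "\<forall>a'\<in>{1..w}. c (i, a' - 1) = a'" using \<open>i < 2^w\<close> by (auto simp: c_def tvars_def)
      show "(\<lambda>j. c (i, j)) ` {..<w} \<subseteq> {1..w}" using \<open>i < 2^w\<close> by (auto simp: c_def tvars_def)
      show "(\<lambda>j. j - 1) ` {1..w} \<subseteq> {..<w}" by auto
    qed
  next
    fix v assume "v \<notin> tvars w" then show "c v = 0" by (simp add: c_def)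
  qed
  then show ?thesis by auto
qed


lemma pow_ineq:
  fixes k :: nat assumes "k \<ge> 1"
  shows "(2*k)^(2*k) \<le> 4 * (2*k - 1)^(2*k)"
proof -
  have kp: "real k > 0" using assms by simp
  have b: "1 + real k * (- 1 / (2 * real k)) \<le> (1 + (- 1 / (2 * real k)))^k"
    by (rule Bernoulli_inequality) (use assms in \<open>simp add: field_simps\<close>)
  have "1 + real k * (- 1 / (2 * real k)) = 1/2" using kp by (simp add: field_simps)
  moreover have "1 + (- 1 / (2 * real k)) = (2 * real k - 1) / (2 * real k)" using kp by (simp add: field_simps)
  ultimately have "1/2 \<le> ((2 * real k - 1) / (2 * real k))^k" using b by simp
  then have "(2 * real k)^k \<le> 2 * (2 * real k - 1)^k" using kp by (simp add: power_divide field_simps)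
  then have "((2 * real k)^k)^2 \<le> (2 * (2 * real k - 1)^k)^2"
    by (rule power_mono) simp
  then have "(2 * real k)^(2*k) \<le> 4 * (2 * real k - 1)^(2*k)"
    by (simp add: power_mult_distrib power_mult[symmetric] mult.commute)
  then have "real ((2*k)^(2*k)) \<le> real (4 * (2*k - 1)^(2*k))"
    using assms by (simp add: of_nat_diff)
  then show ?thesis by linarith
qed

definition phi :: "nat \<Rightarrow> (nat \<times> nat \<Rightarrow> bool) \<Rightarrow> nat \<Rightarrow> nat set" where
  "phi w x = restrict (\<lambda>i. {j. j < w \<and> x (i, j)}) {..<2^w}"

definition psi :: "nat \<Rightarrow> (nat \<Rightarrow> nat set) \<Rightarrow> (nat \<times> nat \<Rightarrow> bool)" where
  "psi w F = (\<lambda>v. fst v < 2^w \<and> snd v < w \<and> snd v \<in> F (fst v))"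

lemma bij_gen:
  assumes "\<And>x. x \<in> X \<longleftrightarrow> x \<in> inputs w \<and> (\<forall>i<2^w. {j. j < w \<and> x (i, j)} \<in> T)"
    and "T \<subseteq> Pow {..<w}"
  shows "bij_betw (phi w) X (PiE {..<(2::nat)^w} (\<lambda>_. T))"
proof (rule bij_betw_byWitness[where f'="psi w"])
  show "\<forall>x\<in>X. psi w (phi w x) = x"
  proof
    fix x assume "x \<in> X"
    then have x: "x \<in> inputs w" using assms(1) by blast
    show "psi w (phi w x) = x"
    proof
      fix v show "psi w (phi w x) v = x v"
        using x by (cases v) (auto simp: psi_def phi_def inputs_def tvars_def)
    qed
  qed
  show "\<forall>F\<in>PiE {..<(2::nat)^w} (\<lambda>_. T). phi w (psi w F) = F"
  proof
    fix F assume F: "F \<in> PiE {..<(2::nat)^w} (\<lambda>_. T)"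
    show "phi w (psi w F) = F"
    proof
      fix i show "phi w (psi w F) i = F i"
      proof (cases "i < 2^w")
        case True
        then have "F i \<subseteq> {..<w}" using F assms(2) by (auto simp: PiE_def Pi_def)
        then show ?thesis using True by (auto simp: phi_def psi_def)
      next
        case False then show ?thesis using F by (auto simp: phi_def PiE_def extensional_def)
      qed
    qed
  qed
  show "phi w ` X \<subseteq> PiE {..<(2::nat)^w} (\<lambda>_. T)"
    using assms(1) by (auto simp: phi_def)
  show "psi w ` PiE {..<(2::nat)^w} (\<lambda>_. T) \<subseteq> X"
  proof
    fix y assume "y \<in> psi w ` PiE {..<(2::nat)^w} (\<lambda>_. T)"
    then obtain F where F: "F \<in> PiE {..<(2::nat)^w} (\<lambda>_. T)" and y: "y = psi w F" by auto
    have "y \<in> inputs w" using y by (auto simp: inputs_def psi_def tvars_def)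
    moreover have "{j. j < w \<and> y (i, j)} \<in> T" if "i < 2^w" for i
    proof -
      have "F i \<in> T" using F that by auto
      moreover have "F i \<subseteq> {..<w}" using \<open>F i \<in> T\<close> assms(2) by auto
      ultimately have "{j. j < w \<and> y (i, j)} = F i" using that y by (auto simp: psi_def)
      then show ?thesis using \<open>F i \<in> T\<close> by simp
    qed
    ultimately show "y \<in> X" using assms(1) by blast
  qed
qed

lemma card_A:
  assumes "w \<ge> 1"
  shows "card (inputs w) \<le> 4 * card {x \<in> inputs w. \<not> tribes w x}"
proof -
  have b1: "bij_betw (phi w) (inputs w) (PiE {..<(2::nat)^w} (\<lambda>_. Pow {..<w}))"
    by (rule bij_gen) auto
  have b2: "bij_betw (phi w) {x \<in> inputs w. \<not> tribes w x} (PiE {..<(2::nat)^w} (\<lambda>_. Pow {..<w} - {{..<w}}))"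
  proof (rule bij_gen)
    fix x
    have "(\<not> tribes w x) \<longleftrightarrow> (\<forall>i<2^w. {j. j < w \<and> x (i, j)} \<noteq> {..<w})"
      unfolding tribes_def by auto
    then show "x \<in> {x \<in> inputs w. \<not> tribes w x} \<longleftrightarrow>
      x \<in> inputs w \<and> (\<forall>i<2^w. {j. j < w \<and> x (i, j)} \<in> Pow {..<w} - {{..<w}})"
      by auto
  qed auto
  have c1: "card (inputs w) = (2^w)^(2^w)"
    using bij_betw_same_card[OF b1] by (simp add: card_PiE card_Pow)
  have c2: "card {x \<in> inputs w. \<not> tribes w x} = (2^w - 1)^(2^w)"
    using bij_betw_same_card[OF b2] by (simp add: card_PiE card_Pow card_Diff_singleton)
  define k where "k = (2::nat)^(w - 1)"
  have k: "2^w = 2 * k" "k \<ge> 1"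
  proof -
    have "w = Suc (w - 1)" using assms by simp
    then show "2^w = 2 * k" unfolding k_def by (metis power_Suc)
    show "k \<ge> 1" unfolding k_def by simp
  qed
  show ?thesis unfolding c1 c2 k(1) using pow_ineq[OF k(2)] .
qed


lemma double_count:
  assumes "finite I" "finite P"
  shows "(\<Sum>i\<in>I. card {p\<in>P. Q i p}) = (\<Sum>p\<in>P. card {i\<in>I. Q i p})"
proof -
  have "(\<Sum>i\<in>I. card {p\<in>P. Q i p}) = (\<Sum>i\<in>I. \<Sum>p\<in>P. if Q i p then 1 else 0)"
    using assms by (simp add: sum.inter_filter[symmetric])
  also have "\<dots> = (\<Sum>p\<in>P. \<Sum>i\<in>I. if Q i p then 1 else 0)" by (rule sum.swap)
  also have "\<dots> = (\<Sum>p\<in>P. card {i\<in>I. Q i p})"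
    using assms by (simp add: sum.inter_filter[symmetric])
  finally show ?thesis .
qed

lemma count_main:
  fixes w :: nat and s :: strategy
  defines "M \<equiv> (2::nat)^w"
  defines "W \<equiv> {(x, c). x \<in> inputs w \<and> c \<in> costs w \<and> \<not> correct w s x c}"
  defines "A \<equiv> {x \<in> inputs w. \<not> tribes w x}"
  shows "M * card (A \<times> costs w) \<le> M * card W + (\<Sum>(x,c)\<in>inputs w \<times> costs w. tribes_revealed w s x c)"
proof -
  let ?S = "inputs w \<times> costs w"
  have finS: "finite ?S" using finite_inputs finite_costs by simp
  have WS: "W \<subseteq> ?S" by (auto simp: W_def)
  have finW: "finite W" using finite_subset[OF WS finS] .
  define WA where "WA = {p\<in>W. \<not> tribes w (fst p)}"
  define WF where "WF = {p\<in>W. tribes w (fst p)}"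
  have cW: "card W = card WA + card WF"
  proof -
    have "W = WA \<union> WF" "WA \<inter> WF = {}" by (auto simp: WA_def WF_def)
    then show ?thesis using finW card_Un_disjoint[of WA WF] by (simp add: WA_def WF_def)
  qed
  define SAC where "SAC = {p \<in> A \<times> costs w. correct w s (fst p) (snd p)}"
  have AC: "A \<times> costs w \<subseteq> ?S" by (auto simp: A_def)
  have finAC: "finite (A \<times> costs w)" using finite_subset[OF AC finS] .
  have cAC: "card (A \<times> costs w) = card WA + card SAC"
  proof -
    have "A \<times> costs w = WA \<union> SAC" "WA \<inter> SAC = {}"
      by (auto simp: WA_def SAC_def W_def A_def)
    moreover have "finite WA" "finite SAC" using finAC \<open>A \<times> costs w = WA \<union> SAC\<close>
      by (metis finite_Un)+
    ultimately show ?thesis using card_Un_disjoint[of WA SAC] by simp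
  qed
  define B where "B i = {p\<in>W. (\<forall>j<w. fst p (i, j)) \<and> (\<forall>i'<M. i' \<noteq> i \<longrightarrow> \<not> (\<forall>j<w. fst p (i', j)))}" for i
  have sB: "(\<Sum>i<M. card (B i)) \<le> card WF"
  proof -
    have "(\<Sum>i<M. card (B i)) = card (\<Union>i\<in>{..<M}. B i)"
    proof (rule card_UN_disjoint[symmetric])
      show "finite {..<M}" by simp
      show "\<forall>i\<in>{..<M}. finite (B i)" using finW by (auto simp: B_def)
      show "\<forall>i\<in>{..<M}. \<forall>j\<in>{..<M}. i \<noteq> j \<longrightarrow> B i \<inter> B j = {}"
        by (auto simp: B_def)
    qed
    also have "\<dots> \<le> card WF"
    proof (rule card_mono)
      show "finite WF" using finW by (simp add: WF_def)
      show "(\<Union>i\<in>{..<M}. B i) \<subseteq> WF"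
        by (auto simp: B_def WF_def tribes_def M_def)
    qed
    finally show ?thesis .
  qed
  define G where "G i = {p\<in>SAC. i \<notin> Rv w s (fst p) (snd p)}" for i
  have cG: "card (G i) \<le> card (B i) * M" if i: "i < M" for i
  proof -
    define f where "f p = ((upd w i (fst p), snd p), {j. j < w \<and> fst p (i, j)})" for p :: "(nat \<times> nat \<Rightarrow> bool) \<times> (nat \<times> nat \<Rightarrow> nat)"
    have "card (G i) \<le> card (B i \<times> Pow {..<w})"
    proof (rule card_inj_on_le)
      show "inj_on f (G i)"
      proof (rule inj_onI)
        fix p q assume "p \<in> G i" "q \<in> G i" and fpq: "f p = f q"
        obtain x c where p: "p = (x, c)" by (cases p)
        obtain y d where q: "q = (y, d)" by (cases q)
        have 1: "upd w i x = upd w i y" "c = d" "{j. j < w \<and> x (i, j)} = {j. j < w \<and> y (i, j)}"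
          using fpq by (auto simp: f_def p q)
        have "x = y"
        proof
          fix v show "x v = y v"
          proof (cases "fst v = i \<and> snd v < w")
            case True
            then show ?thesis using 1(3) by (cases v) auto
          next
            case False
            then show ?thesis using fun_cong[OF 1(1), of v] unfolding upd_def by (simp only: if_False)
          qed
        qed
        then show "p = q" using p q 1(2) by simp
      qed
      show "f ` G i \<subseteq> B i \<times> Pow {..<w}"
      proof
        fix z assume "z \<in> f ` G i"
        then obtain x c where xc: "(x, c) \<in> G i" and z: "z = f (x, c)" by auto
        have x: "x \<in> inputs w" "\<not> tribes w x" "c \<in> costs w" "correct w s x c" "i \<notin> Rv w s x c"
          using xc by (auto simp: G_def SAC_def A_def)
        have "upd w i x \<in> inputs w" using x(1) i by (auto simp: inputs_def upd_def tvars_def M_def)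
        moreover have "\<not> correct w s (upd w i x) c"
          using wrong_upd[OF x(2) x(4) _ x(5)] i by (simp add: M_def)
        moreover have "\<forall>j<w. upd w i x (i, j)" by (simp add: upd_def)
        moreover have "\<forall>i'<M. i' \<noteq> i \<longrightarrow> \<not> (\<forall>j<w. upd w i x (i', j))"
          using x(2) by (auto simp: upd_def tribes_def M_def)
        ultimately show "z \<in> B i \<times> Pow {..<w}"
          using x(3) by (auto simp: z f_def B_def W_def)
      qed
      show "finite (B i \<times> Pow {..<w})" using finW by (simp add: B_def)
    qed
    also have "\<dots> = card (B i) * M" by (simp add: card_cartesian_product card_Pow M_def)
    finally show ?thesis .
  qed
  have finSAC: "finite SAC" using finAC by (simp add: SAC_def)
  have sG: "(\<Sum>i<M. card (G i)) = (\<Sum>p\<in>SAC. card {i\<in>{..<M}. i \<notin> Rv w s (fst p) (snd p)})"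
    unfolding G_def by (rule double_count) (use finSAC in auto)
  have split: "card {i\<in>{..<M}. i \<notin> Rv w s (fst p) (snd p)} + tribes_revealed w s (fst p) (snd p) = M" for p
  proof -
    have sub: "Rv w s (fst p) (snd p) \<subseteq> {..<M}" by (auto simp: Rv_def M_def)
    have "{i\<in>{..<M}. i \<notin> Rv w s (fst p) (snd p)} = {..<M} - Rv w s (fst p) (snd p)" by auto
    moreover have "tribes_revealed w s (fst p) (snd p) = card (Rv w s (fst p) (snd p))"
      by (simp add: tribes_revealed_def Rv_def)
    moreover have "card (Rv w s (fst p) (snd p)) \<le> M"
      using card_mono[OF _ sub] by simp
    ultimately show ?thesis using card_Diff_subset[OF finite_subset[OF sub] sub] by simp
  qed
  have sN: "(\<Sum>p\<in>SAC. tribes_revealed w s (fst p) (snd p)) \<le> (\<Sum>(x,c)\<in>?S. tribes_revealed w s x c)"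
  proof -
    have "(\<Sum>p\<in>SAC. tribes_revealed w s (fst p) (snd p)) \<le> (\<Sum>p\<in>?S. tribes_revealed w s (fst p) (snd p))"
      by (rule sum_mono2[OF finS]) (use AC in \<open>auto simp: SAC_def\<close>)
    then show ?thesis by (simp add: case_prod_beta')
  qed
  have "M * card (A \<times> costs w) = M * card WA + (\<Sum>p\<in>SAC. M)" using cAC by (simp add: algebra_simps)
  also have "(\<Sum>p\<in>SAC. M) = (\<Sum>p\<in>SAC. card {i\<in>{..<M}. i \<notin> Rv w s (fst p) (snd p)}) + (\<Sum>p\<in>SAC. tribes_revealed w s (fst p) (snd p))"
    by (simp only: sum.distrib[symmetric] split)
  also have "(\<Sum>p\<in>SAC. card {i\<in>{..<M}. i \<notin> Rv w s (fst p) (snd p)}) \<le> M * card WF"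
  proof -
    have "(\<Sum>i<M. card (G i)) \<le> (\<Sum>i<M. card (B i) * M)" by (rule sum_mono) (use cG in auto)
    also have "\<dots> = M * (\<Sum>i<M. card (B i))" by (simp add: sum_distrib_left mult.commute)
    also have "\<dots> \<le> M * card WF" using sB by simp
    finally show ?thesis using sG by simp
  qed
  finally show ?thesis using sN cW by (simp add: algebra_simps)
qed


lemma det_bound:
  assumes "w \<ge> 1"
  shows "1/4 \<le> det_error w s + det_revealed w s / 2^w"
proof -
  define M where "M = (2::nat)^w"
  define W where "W = {(x, c). x \<in> inputs w \<and> c \<in> costs w \<and> \<not> correct w s x c}"
  define A where "A = {x \<in> inputs w. \<not> tribes w x}"
  define N where "N = (\<Sum>(x,c)\<in>inputs w \<times> costs w. tribes_revealed w s x c)"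
  define K where "K = card (inputs w \<times> costs w)"
  have cm: "M * card (A \<times> costs w) \<le> M * card W + N"
    unfolding M_def W_def A_def N_def by (rule count_main)
  have ca: "card (inputs w) \<le> 4 * card A" unfolding A_def by (rule card_A[OF assms])
  have "(\<lambda>_. False) \<in> inputs w" by (simp add: inputs_def)
  then have "card (inputs w) > 0" using finite_inputs card_gt_0_iff by blast
  moreover have "card (costs w) > 0" using finite_costs costs_ne card_gt_0_iff by blast
  ultimately have Kpos: "K > 0" unfolding K_def by (simp add: card_cartesian_product)
  have "M * K \<le> 4 * (M * card W + N)"
  proof -
    have "M * K = M * card (inputs w) * card (costs w)" by (simp add: K_def card_cartesian_product)
    also have "\<dots> \<le> M * (4 * card A) * card (costs w)" using ca by simp
    also have "\<dots> = 4 * (M * card (A \<times> costs w))" by (simp add: card_cartesian_product)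
    also have "\<dots> \<le> 4 * (M * card W + N)" using cm by simp
    finally show ?thesis .
  qed
  then have "real (M * K) \<le> real (4 * (M * card W + N))" by (rule of_nat_mono)
  then have r: "real M * real K \<le> 4 * (real M * real (card W) + real N)" by simp
  have de: "det_error w s = real (card W) / real K" by (simp add: det_error_def W_def K_def)
  have dr: "det_revealed w s = real N / real K" by (simp add: det_revealed_def N_def K_def of_nat_sum case_prod_beta')
  have Mpos: "real M > 0" by (simp add: M_def)
  have Kp: "real K > 0" using Kpos by simp
  have "real (card W) / real K + real N / real K / real M = (real M * real (card W) + real N) / (real K * real M)"
    using Kp Mpos by (simp add: field_simps)
  also have "\<dots> \<ge> 1/4" using r Kp Mpos by (simp add: le_divide_eq mult.commute)
  finally have "1/4 \<le> real (card W) / real K + real N / real K / real M" .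
  then show ?thesis by (simp add: de dr M_def)
qed

lemma det_error_bounds: "0 \<le> det_error w s \<and> det_error w s \<le> 1"
proof -
  have "{(x, c). x \<in> inputs w \<and> c \<in> costs w \<and> \<not> correct w s x c} \<subseteq> inputs w \<times> costs w" by auto
  then have "card {(x, c). x \<in> inputs w \<and> c \<in> costs w \<and> \<not> correct w s x c} \<le> card (inputs w \<times> costs w)"
    by (rule card_mono[rotated]) (simp add: finite_inputs finite_costs)
  then show ?thesis unfolding det_error_def
    by (cases "card (inputs w \<times> costs w) = 0") (auto simp: divide_le_eq_1)
qed

lemma det_revealed_bounds: "0 \<le> det_revealed w s \<and> det_revealed w s \<le> 2^w"
proof -
  have tr: "tribes_revealed w s x c \<le> 2^w" for x c
  proof -
    have "{i. i < 2^w \<and> (\<exists>j<w. revealed w s x c (i, j))} \<subseteq> {..<2^w}" by auto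
    then show ?thesis unfolding tribes_revealed_def using card_mono[of "{..<(2::nat)^w}"] by fastforce
  qed
  have "(\<Sum>(x, c)\<in>inputs w \<times> costs w. real (tribes_revealed w s x c)) \<le> (\<Sum>p\<in>inputs w \<times> costs w. 2^w)"
    by (rule sum_mono) (use tr in \<open>auto simp: case_prod_beta'\<close>)
  also have "\<dots> = real (card (inputs w \<times> costs w)) * 2^w" by simp
  finally have "(\<Sum>(x, c)\<in>inputs w \<times> costs w. real (tribes_revealed w s x c)) \<le> real (card (inputs w \<times> costs w)) * 2^w" .
  moreover have "0 \<le> (\<Sum>(x, c)\<in>inputs w \<times> costs w. real (tribes_revealed w s x c))"
    by (rule sum_nonneg) auto
  ultimately show ?thesis unfolding det_revealed_def
    by (cases "card (inputs w \<times> costs w) = 0") (auto simp: divide_le_eq field_simps)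
qed

theorem mainTheorem13:
  fixes \<epsilon>0 :: real
  assumes "0 \<le> \<epsilon>0" and "\<epsilon>0 < 1/4"
  shows "\<exists>C>0. \<forall>w::nat. \<forall>R. w \<ge> 1 \<longrightarrow> randomized_alg w R \<longrightarrow>
           (\<integral>s. det_error w s \<partial>R) \<le> \<epsilon>0 \<longrightarrow>
           (\<integral>s. det_revealed w s \<partial>R) \<ge> C * 2 ^ w"
proof (intro exI[of _ "1/4 - \<epsilon>0"] conjI allI impI)
  show "0 < 1/4 - \<epsilon>0" using assms by simp
  fix w :: nat and R :: "strategy measure"
  assume w: "w \<ge> 1" and ra: "randomized_alg w R" and le: "(\<integral>s. det_error w s \<partial>R) \<le> \<epsilon>0"
  interpret prob_space R using ra by (simp add: randomized_alg_def)
  have m1: "det_error w \<in> borel_measurable R" and m2: "det_revealed w \<in> borel_measurable R"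
    using ra by (auto simp: randomized_alg_def)
  have i1: "integrable R (det_error w)"
    by (rule integrable_const_bound[where B=1]) (use m1 det_error_bounds in auto)
  have i2: "integrable R (det_revealed w)"
    by (rule integrable_const_bound[where B="2^w"]) (use m2 det_revealed_bounds in auto)
  have "(\<integral>s. 2^w * (1/4 - det_error w s) \<partial>R) \<le> (\<integral>s. det_revealed w s \<partial>R)"
  proof (rule integral_mono)
    show "integrable R (\<lambda>s. 2^w * (1/4 - det_error w s))" using i1 by auto
    show "integrable R (det_revealed w)" by (rule i2)
    fix s
    have "1/4 \<le> det_error w s + det_revealed w s / 2^w" by (rule det_bound[OF w])
    then show "2^w * (1/4 - det_error w s) \<le> det_revealed w s" by (simp add: field_simps)
  qed
  moreover have "(\<integral>s. 2^w * (1/4 - det_error w s) \<partial>R) = 2^w * (1/4 - (\<integral>s. det_error w s \<partial>R))"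
    using i1 prob_space by (simp add: integral_diff)
  ultimately have "2^w * (1/4 - (\<integral>s. det_error w s \<partial>R)) \<le> (\<integral>s. det_revealed w s \<partial>R)" by simp
  moreover have "(1/4 - \<epsilon>0) * 2^w \<le> 2^w * (1/4 - (\<integral>s. det_error w s \<partial>R))" using le by simp
  ultimately show "(1/4 - \<epsilon>0) * 2^w \<le> (\<integral>s. det_revealed w s \<partial>R)" by linarith
qed

end
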